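(* The boundary of $V_n$ (in $\mathbb{R}^n$) consists exactly of those $\mathbf b\in V_n$ such that $g_{\mathbf b}$ has a multiple root.
   Context: For $\mathbf b=(b_1,\dots,b_n)\in\mathbb{R}^n$ let $g_{\mathbf b}=(x^{2n}+1)+b_1(x^{2n-1}+x)+\cdots+b_{n-1}(x^{n+1}+x^{n-1})+b_nx^n$. Let $V_n$ be the set of $\mathbf b\in\mathbb{R}^n$ such that all complex roots of $g_{\mathbf b}$ lie on the unit circle. *)

theory Defs
  imports "HOL-Analysis.Analysis" "HOL-Computational_Algebra.Polynomial"
begin

text \<open>Coordinates of R^n are indexed by a finite well-ordered type 'n; the coordinate
  i is the (pos i + 1)-th coordinate, i.e. b_k with k = pos i + 1, where n = CARD('n).\<close>

definition pos :: "'n::{finite,wellorder} \<Rightarrow> nat" where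
  "pos i = card {j. j < i}"

definition gpoly :: "real ^ 'n::{finite,wellorder} \<Rightarrow> complex poly" where
  "gpoly b = monom 1 (2 * CARD('n)) + 1 +
     (\<Sum>i\<in>UNIV. (if pos i + 1 = CARD('n)
                   then monom (complex_of_real (b $ i)) CARD('n)
                   else monom (complex_of_real (b $ i)) (2 * CARD('n) - (pos i + 1))
                        + monom (complex_of_real (b $ i)) (pos i + 1)))"

definition Vset :: "(real ^ 'n::{finite,wellorder}) set" where
  "Vset = {b. \<forall>z. poly (gpoly b) z = 0 \<longrightarrow> cmod z = 1}"

end

theory Submission
  imports Defs "HOL-Computational_Algebra.Fundamental_Theorem_Algebra"
begin



lemma pos_less: "pos (i::'n::{finite,wellorder}) < CARD('n)"
proof -
  have "{j. j < i} \<subset> UNIV" by auto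
  then show ?thesis unfolding pos_def by (simp add: psubset_card_mono)
qed

lemma pos_mono: "(i::'n::{finite,wellorder}) < j \<Longrightarrow> pos i < pos j"
proof -
  assume "i < j"
  then have "{k. k < i} \<subset> {k. k < j}" by auto
  then show ?thesis unfolding pos_def by (simp add: psubset_card_mono)
qed

lemma pos_inj: "inj (pos :: 'n::{finite,wellorder} \<Rightarrow> nat)"
  by (metis injI linorder_neqE pos_mono less_irrefl)

lemma pos_image: "range (pos :: 'n::{finite,wellorder} \<Rightarrow> nat) = {..<CARD('n)}"
proof -
  have "range (pos :: 'n \<Rightarrow> nat) \<subseteq> {..<CARD('n)}" using pos_less by auto
  moreover have "card (range (pos :: 'n \<Rightarrow> nat)) = card {..<CARD('n)}"
    by (simp add: card_image[OF pos_inj])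
  ultimately show ?thesis by (simp add: card_subset_eq)
qed

lemma pos_ex: "1 \<le> t \<Longrightarrow> t \<le> CARD('n) \<Longrightarrow> \<exists>i::'n::{finite,wellorder}. pos i + 1 = t"
proof -
  assume "1 \<le> t" "t \<le> CARD('n)"
  then have "t - 1 \<in> range (pos :: 'n \<Rightarrow> nat)" using pos_image by auto
  then obtain i :: 'n where "pos i = t - 1" by auto
  then show ?thesis using \<open>1 \<le> t\<close> by (intro exI[of _ i]) simp
qed

lemma sum_pos_delta:
  fixes f :: "'n::{finite,wellorder} \<Rightarrow> 'a::comm_monoid_add"
  assumes "pos i + 1 = t"
  shows "(\<Sum>j\<in>UNIV. if pos j + 1 = t then f j else 0) = f i"
proof -
  have "\<And>j. (pos j + 1 = t) = (j = i)" using assms pos_inj by (auto simp: inj_def)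
  then show ?thesis by simp
qed

lemma sum_pos_none:
  fixes f :: "'n::{finite,wellorder} \<Rightarrow> 'a::comm_monoid_add"
  assumes "t = 0 \<or> t > CARD('n)"
  shows "(\<Sum>j\<in>UNIV. if pos j + 1 = t then f j else 0) = 0"
proof -
  have "\<And>j::'n. pos j + 1 \<noteq> t" using assms pos_less by (metis add_is_0 less_SucI not_less_eq one_neq_zero Suc_eq_plus1)
  then show ?thesis by simp
qed

definition kap :: "nat \<Rightarrow> nat \<Rightarrow> nat" where
  "kap N m = (if m \<le> N then m else 2 * N - m)"

lemma coeff_gpoly:
  "coeff (gpoly (b :: real ^ 'n::{finite,wellorder})) m =
     (if m = 2 * CARD('n) then 1 else 0) + (if m = 0 then 1 else 0) +
     (\<Sum>i\<in>UNIV. complex_of_real (b $ i) * (if pos i + 1 = kap CARD('n) m then 1 else 0))"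
proof -
  have "coeff (if pos i + 1 = CARD('n)
                   then monom (complex_of_real (b $ i)) CARD('n)
                   else monom (complex_of_real (b $ i)) (2 * CARD('n) - (pos i + 1))
                        + monom (complex_of_real (b $ i)) (pos i + 1)) m
     = complex_of_real (b $ i) * (if pos i + 1 = kap CARD('n) m then 1 else 0)" for i :: 'n
    using pos_less[of i] by (auto simp: kap_def)
  then show ?thesis
    unfolding gpoly_def by (simp add: coeff_sum)
qed


lemma N_pos: "CARD('n::{finite,wellorder}) > 0" by simp

lemma kap_sym: "m \<le> 2 * N \<Longrightarrow> kap N (2 * N - m) = kap N m"
  by (auto simp: kap_def)

lemma coeff_gpoly_real: "coeff (gpoly (b :: real ^ 'n::{finite,wellorder})) m \<in> \<real>"
  unfolding coeff_gpoly by (intro Reals_add sum_in_Reals Reals_mult) auto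

lemma coeff_gpoly_top: "coeff (gpoly (b :: real ^ 'n::{finite,wellorder})) (2 * CARD('n)) = 1"
proof -
  have "kap CARD('n) (2 * CARD('n)) = 0" using N_pos[where 'n='n] by (simp add: kap_def)
  then show ?thesis unfolding coeff_gpoly using N_pos[where 'n='n] by simp
qed

lemma coeff_gpoly_0: "coeff (gpoly (b :: real ^ 'n::{finite,wellorder})) 0 = 1"
proof -
  have "kap CARD('n) 0 = 0" by (simp add: kap_def)
  then show ?thesis unfolding coeff_gpoly using N_pos[where 'n='n] by simp
qed

lemma coeff_gpoly_big: "m > 2 * CARD('n) \<Longrightarrow> coeff (gpoly (b :: real ^ 'n::{finite,wellorder})) m = 0"
proof -
  assume m: "m > 2 * CARD('n)"
  have "kap CARD('n) m = 0" using m by (simp add: kap_def)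
  then show ?thesis unfolding coeff_gpoly using m by simp
qed

lemma coeff_gpoly_sym: "m \<le> 2 * CARD('n) \<Longrightarrow>
   coeff (gpoly (b :: real ^ 'n::{finite,wellorder})) (2 * CARD('n) - m) = coeff (gpoly b) m"
  unfolding coeff_gpoly using kap_sym[of m "CARD('n)"] by auto

lemma degree_gpoly: "degree (gpoly (b :: real ^ 'n::{finite,wellorder})) = 2 * CARD('n)"
proof (rule antisym)
  show "degree (gpoly b) \<le> 2 * CARD('n)"
    by (rule degree_le) (simp add: coeff_gpoly_big)
  show "2 * CARD('n) \<le> degree (gpoly b)"
    by (rule le_degree) (simp add: coeff_gpoly_top)
qed

lemma gpoly_nz: "gpoly b \<noteq> 0"
  using coeff_gpoly_top[of b] by auto

lemma lead_gpoly: "lead_coeff (gpoly b) = 1"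
  by (simp add: degree_gpoly coeff_gpoly_top)

lemma reflect_gpoly: "reflect_poly (gpoly (b :: real ^ 'n::{finite,wellorder})) = gpoly b"
  by (rule poly_eqI) (auto simp: coeff_reflect_poly degree_gpoly coeff_gpoly_sym coeff_gpoly_big)

lemma poly_gpoly_inv: "z \<noteq> 0 \<Longrightarrow>
   poly (gpoly (b :: real ^ 'n::{finite,wellorder})) z = z ^ (2 * CARD('n)) * poly (gpoly b) (inverse z)"
  using poly_reflect_poly_nz[of z "gpoly b"] by (simp add: reflect_gpoly degree_gpoly)

lemma poly_gpoly_cnj: "poly (gpoly b) (cnj z) = cnj (poly (gpoly b) z)"
  using poly_cnj_real[of "gpoly b" z, OF coeff_gpoly_real] by simp

lemma poly_gpoly_0: "poly (gpoly b) 0 = 1"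
  by (simp add: poly_0_coeff_0 coeff_gpoly_0)

lemma gpoly_root_nz: "poly (gpoly b) z = 0 \<Longrightarrow> z \<noteq> 0"
  using poly_gpoly_0[of b] by auto

lemma gpoly_root_inv: "poly (gpoly b) z = 0 \<Longrightarrow> poly (gpoly b) (inverse z) = 0"
  using poly_gpoly_inv[of z b] gpoly_root_nz[of b z] by auto

lemma gpoly_root_cnj: "poly (gpoly b) z = 0 \<Longrightarrow> poly (gpoly b) (cnj z) = 0"
  by (simp add: poly_gpoly_cnj)

lemma Vset_alt: "b \<in> Vset \<longleftrightarrow> (\<forall>z. poly (gpoly b) z = 0 \<longrightarrow> 1 \<le> cmod z)"
proof
  assume "b \<in> Vset" then show "\<forall>z. poly (gpoly b) z = 0 \<longrightarrow> 1 \<le> cmod z"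
    unfolding Vset_def by auto
next
  assume H: "\<forall>z. poly (gpoly b) z = 0 \<longrightarrow> 1 \<le> cmod z"
  show "b \<in> Vset" unfolding Vset_def
  proof (intro CollectI allI impI)
    fix z assume z: "poly (gpoly b) z = 0"
    then have "1 \<le> cmod (inverse z)" using H gpoly_root_inv by blast
    then have "cmod z \<le> 1" using gpoly_root_nz[OF z]
      by (simp add: norm_inverse) (metis le_imp_inverse_le inverse_inverse_eq zero_less_one inverse_1)
    with H z show "cmod z = 1" by force
  qed
qed


lemma poly_sum_D:
  fixes p :: "complex poly"
  assumes "degree p \<le> D" shows "poly p x = (\<Sum>m\<le>D. coeff p m * x ^ m)"
proof -
  have "poly p x = (\<Sum>m\<le>degree p. coeff p m * x ^ m)" by (rule poly_altdef)
  also have "\<dots> = (\<Sum>m\<le>D. coeff p m * x ^ m)"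
    by (rule sum.mono_neutral_left) (use assms in \<open>auto simp: coeff_eq_0\<close>)
  finally show ?thesis .
qed

lemma tendsto_coeff_gpoly:
  fixes s :: "nat \<Rightarrow> real ^ 'n::{finite,wellorder}"
  assumes "s \<longlonglongrightarrow> b"
  shows "(\<lambda>k. coeff (gpoly (s k)) m) \<longlonglongrightarrow> coeff (gpoly b) m"
  unfolding coeff_gpoly by (intro tendsto_intros assms)

lemma poly_gpoly_sum: "poly (gpoly (b :: real ^ 'n::{finite,wellorder})) x =
    (\<Sum>m\<le>2 * CARD('n). coeff (gpoly b) m * x ^ m)"
  by (rule poly_sum_D) (simp add: degree_gpoly)

lemma tendsto_poly_gpoly:
  fixes s :: "nat \<Rightarrow> real ^ 'n::{finite,wellorder}"
  assumes "s \<longlonglongrightarrow> b" "x \<longlonglongrightarrow> z"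
  shows "(\<lambda>k. poly (gpoly (s k)) (x k)) \<longlonglongrightarrow> poly (gpoly b) z"
  unfolding poly_gpoly_sum by (intro tendsto_intros tendsto_coeff_gpoly assms)

lemma poly_lower:
  fixes p :: "complex poly"
  assumes lead: "lead_coeff p = 1" and roots: "\<forall>a. poly p a = 0 \<longrightarrow> cmod a = 1"
    and z: "cmod z < 1"
  shows "(1 - cmod z) ^ degree p \<le> cmod (poly p z)"
proof -
  obtain root where r: "smult (lead_coeff p) (\<Prod>i<degree p. [:-root i, 1:]) = p"
    using complex_poly_decompose' by blast
  then have p: "p = (\<Prod>i<degree p. [:-root i, 1:])" using lead by simp
  have pz: "poly p y = (\<Prod>i<degree p. y - root i)" for y
    by (subst p) (simp add: poly_prod)
  have "cmod (root i) = 1" if "i < degree p" for i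
  proof -
    have "poly p (root i) = 0" unfolding pz using that by (auto intro: prod_zero)
    then show ?thesis using roots by blast
  qed
  then have le: "1 - cmod z \<le> cmod (z - root i)" if "i < degree p" for i
    using that norm_triangle_ineq2[of "root i" z] by (simp add: norm_minus_commute)
  have "(1 - cmod z) ^ degree p = (\<Prod>i<degree p. 1 - cmod z)" by simp
  also have "\<dots> \<le> (\<Prod>i<degree p. cmod (z - root i))"
    by (rule prod_mono) (use le z in auto)
  also have "\<dots> = cmod (poly p z)" unfolding pz by (simp add: prod_norm)
  finally show ?thesis .
qed

lemma closed_V: "closed (Vset :: (real ^ 'n::{finite,wellorder}) set)"
  unfolding closed_sequential_limits
proof (intro allI impI, elim conjE)
  fix s :: "nat \<Rightarrow> real ^ 'n::{finite,wellorder}" and l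
  assume sV: "\<forall>n. s n \<in> Vset" and lim: "s \<longlonglongrightarrow> l"
  show "l \<in> Vset" unfolding Vset_alt
  proof (intro allI impI)
    fix z assume z: "poly (gpoly l) z = 0"
    show "1 \<le> cmod z"
    proof (rule ccontr)
      assume "\<not> 1 \<le> cmod z"
      then have zl: "cmod z < 1" by simp
      have lb: "(1 - cmod z) ^ (2 * CARD('n)) \<le> cmod (poly (gpoly (s k)) z)" for k
        using poly_lower[of "gpoly (s k)" z] sV zl
        by (simp add: lead_gpoly degree_gpoly Vset_def coeff_gpoly_top)
      have "(\<lambda>k. cmod (poly (gpoly (s k)) z)) \<longlonglongrightarrow> cmod (poly (gpoly l) z)"
        by (intro tendsto_intros tendsto_poly_gpoly lim)
      then have "(1 - cmod z) ^ (2 * CARD('n)) \<le> cmod (poly (gpoly l) z)"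
        by (rule LIMSEQ_le_const) (use lb in auto)
      moreover have "(1 - cmod z) ^ (2 * CARD('n)) > 0" using zl by simp
      ultimately show False using z by simp
    qed
  qed
qed


definition dq :: "nat \<Rightarrow> complex poly \<Rightarrow> complex \<Rightarrow> complex \<Rightarrow> complex" where
  "dq D p u w = (\<Sum>m\<le>D. coeff p m * (\<Sum>i<m. w ^ (m - Suc i) * u ^ i))"

lemma dq_eq:
  assumes "degree p \<le> D"
  shows "poly p u - poly p w = dq D p u w * (u - w)"
proof -
  have "poly p u - poly p w = (\<Sum>m\<le>D. coeff p m * (u ^ m - w ^ m))"
    by (simp add: poly_sum_D[OF assms] sum_subtractf[symmetric] right_diff_distrib)
  also have "\<dots> = (\<Sum>m\<le>D. coeff p m * (\<Sum>i<m. w ^ (m - Suc i) * u ^ i) * (u - w))"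
    by (rule sum.cong) (simp_all add: power_diff_sumr2 mult_ac)
  also have "\<dots> = dq D p u w * (u - w)"
    by (simp add: dq_def sum_distrib_right)
  finally show ?thesis .
qed

lemma dq_deriv:
  assumes "degree p \<le> D"
  shows "dq D p w w = poly (pderiv p) w"
proof -
  have "DERIV (poly p) w :> dq D p w w"
    unfolding CARAT_DERIV
  proof (intro exI conjI allI)
    show "poly p z - poly p w = dq D p z w * (z - w)" for z by (rule dq_eq[OF assms])
    show "isCont (\<lambda>z. dq D p z w) w" unfolding dq_def by (intro continuous_intros)
  qed simp
  then show ?thesis using poly_DERIV[of p w] by (rule DERIV_unique)
qed

lemma order_gt1_iff:
  fixes p :: "complex poly"
  assumes "degree p > 0"
  shows "1 < order z p \<longleftrightarrow> poly p z = 0 \<and> poly (pderiv p) z = 0"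
proof -
  have p0: "p \<noteq> 0" using assms by auto
  have d0: "pderiv p \<noteq> 0" using assms pderiv_eq_0_iff[of p] by auto
  show ?thesis
  proof (cases "poly p z = 0")
    case True
    then have "order z p = Suc (order z (pderiv p))" by (rule order_pderiv[OF p0])
    then show ?thesis using True order_root[of "pderiv p" z] d0 by auto
  next
    case False
    then show ?thesis using order_0I[of p z] by auto
  qed
qed

lemma tendsto_dq_gpoly:
  fixes s :: "nat \<Rightarrow> real ^ 'n::{finite,wellorder}"
  assumes "s \<longlonglongrightarrow> b" "u \<longlonglongrightarrow> x" "w \<longlonglongrightarrow> y"
  shows "(\<lambda>k. dq D (gpoly (s k)) (u k) (w k)) \<longlonglongrightarrow> dq D (gpoly b) x y"
  unfolding dq_def by (intro tendsto_intros tendsto_coeff_gpoly assms)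


lemma inv_cnj_unit: "cmod l = 1 \<Longrightarrow> inverse (cnj l) = l"
proof -
  assume "cmod l = 1"
  then have "l * cnj l = 1" using complex_norm_square[of l] by simp
  then show ?thesis by (metis inverse_unique mult.commute)
qed

lemma simple_interior:
  fixes b :: "real ^ 'n::{finite,wellorder}"
  assumes bV: "b \<in> Vset" and simple: "\<not> (\<exists>z. order z (gpoly b) > 1)"
  shows "b \<in> interior Vset"
proof (rule ccontr)
  assume nI: "b \<notin> interior Vset"
  have "\<forall>k. \<exists>y. dist y b < inverse (real (Suc k)) \<and> y \<notin> Vset"
  proof
    fix k
    have pos: "inverse (real (Suc k)) > 0" by simp
    have "\<not> ball b (inverse (real (Suc k))) \<subseteq> Vset"
      using nI pos unfolding mem_interior by blast
    then show "\<exists>y. dist y b < inverse (real (Suc k)) \<and> y \<notin> Vset"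
      by (auto simp: dist_commute)
  qed
  then obtain s where s: "\<And>k. dist (s k) b < inverse (real (Suc k))" "\<And>k. s k \<notin> Vset"
    unfolding choice_iff by blast
  have slim: "s \<longlonglongrightarrow> b"
    unfolding lim_sequentially
  proof (intro allI impI)
    fix r :: real assume "0 < r"
    then obtain n0 where n0: "inverse (real (Suc n0)) < r" using reals_Archimedean by blast
    have "dist (s n) b < r" if "n0 \<le> n" for n
    proof -
      have "inverse (real (Suc n)) \<le> inverse (real (Suc n0))"
        using that by (simp add: le_imp_inverse_le)
      then show ?thesis using s(1)[of n] n0 by linarith
    qed
    then show "\<exists>no. \<forall>n\<ge>no. dist (s n) b < r" by blast
  qed
  have "\<forall>k. \<exists>w. poly (gpoly (s k)) w = 0 \<and> cmod w < 1"
    using s(2) unfolding Vset_alt by (auto simp: not_le)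
  then obtain w where w: "\<And>k. poly (gpoly (s k)) (w k) = 0" "\<And>k. cmod (w k) < 1"
    unfolding choice_iff by blast
  have "seq_compact (cball (0::complex) 1)" by (rule compact_imp_seq_compact[OF compact_cball])
  obtain l r where l: "l \<in> cball 0 1" and r: "strict_mono r" and wl: "(w \<circ> r) \<longlonglongrightarrow> l"
  proof -
    have "\<forall>k. w k \<in> cball 0 1" using w(2) less_imp_le by auto
    then show ?thesis using \<open>seq_compact (cball (0::complex) 1)\<close> that
      unfolding seq_compact_def by blast
  qed
  have slim': "(s \<circ> r) \<longlonglongrightarrow> b" using LIMSEQ_subseq_LIMSEQ[OF slim r] .
  have eq: "poly (gpoly ((s \<circ> r) k)) ((w \<circ> r) k) = 0" for k
    using w(1)[of "r k"] by (simp only: comp_def)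
  have "(\<lambda>k. poly (gpoly ((s \<circ> r) k)) ((w \<circ> r) k)) \<longlonglongrightarrow> poly (gpoly b) l"
    by (rule tendsto_poly_gpoly[OF slim' wl])
  then have "(\<lambda>k. 0::complex) \<longlonglongrightarrow> poly (gpoly b) l" unfolding eq .
  then have lroot: "poly (gpoly b) l = 0" using LIMSEQ_unique[OF tendsto_const] by (metis)
  then have l1: "cmod l = 1" using bV unfolding Vset_def by auto
  define u where "u k = inverse (cnj (w k))" for k
  have u: "poly (gpoly (s k)) (u k) = 0" for k
    unfolding u_def by (intro gpoly_root_inv gpoly_root_cnj w(1))
  have uw: "u k \<noteq> w k" for k
  proof
    assume "u k = w k"
    then have "cmod (u k) = cmod (w k)" by simp
    moreover have "w k \<noteq> 0" using gpoly_root_nz[OF w(1)] .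
    ultimately have "inverse (cmod (w k)) = cmod (w k)" unfolding u_def by (simp add: norm_inverse)
    moreover have "cmod (w k) * inverse (cmod (w k)) = 1" using \<open>w k \<noteq> 0\<close> by simp
    ultimately have "cmod (w k) * cmod (w k) = 1" by simp
    moreover have "cmod (w k) * cmod (w k) \<le> cmod (w k) * 1"
      by (rule mult_left_mono) (use w(2)[of k] in auto)
    then have "cmod (w k) * cmod (w k) < 1" using w(2)[of k] by linarith
    ultimately show False by simp
  qed
  have ul: "(u \<circ> r) \<longlonglongrightarrow> l"
  proof -
    have "(\<lambda>k. inverse (cnj ((w \<circ> r) k))) \<longlonglongrightarrow> inverse (cnj l)"
      using l1 by (intro tendsto_intros wl) auto
    then show ?thesis using inv_cnj_unit[OF l1] by (simp add: u_def comp_def)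
  qed
  have dq0: "dq (2 * CARD('n)) (gpoly (s k)) (u k) (w k) = 0" for k
    using dq_eq[of "gpoly (s k)" "2 * CARD('n)" "u k" "w k"] u[of k] w(1)[of k] uw[of k]
    by (simp add: degree_gpoly)
  have eq2: "dq (2 * CARD('n)) (gpoly ((s \<circ> r) k)) ((u \<circ> r) k) ((w \<circ> r) k) = 0" for k
    using dq0[of "r k"] by (simp only: comp_def)
  have "(\<lambda>k. dq (2 * CARD('n)) (gpoly ((s \<circ> r) k)) ((u \<circ> r) k) ((w \<circ> r) k))
          \<longlonglongrightarrow> dq (2 * CARD('n)) (gpoly b) l l"
    by (rule tendsto_dq_gpoly[OF slim' ul wl])
  then have "(\<lambda>k. 0::complex) \<longlonglongrightarrow> dq (2 * CARD('n)) (gpoly b) l l" unfolding eq2 .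
  then have "dq (2 * CARD('n)) (gpoly b) l l = 0" using LIMSEQ_unique[OF tendsto_const] by metis
  then have "poly (pderiv (gpoly b)) l = 0"
    using dq_deriv[of "gpoly b" "2 * CARD('n)" l] by (simp add: degree_gpoly)
  then have "1 < order l (gpoly b)"
    using order_gt1_iff[of "gpoly b" l] lroot by (simp add: degree_gpoly)
  then show False using simple by blast
qed


lemma sum_v:
  fixes P :: "complex poly"
  assumes real: "\<And>m. coeff P m \<in> \<real>" and P0: "coeff P 0 = 0"
    and big: "\<And>m. m \<ge> 2 * CARD('n) \<Longrightarrow> coeff P m = 0"
    and sym: "\<And>m. m \<le> 2 * CARD('n) \<Longrightarrow> coeff P (2 * CARD('n) - m) = coeff P m"
  shows "(\<Sum>i\<in>(UNIV::'n::{finite,wellorder} set). complex_of_real (Re (coeff P (pos i + 1))) *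
            (if pos i + 1 = kap CARD('n) m then 1 else 0)) = coeff P m"
proof -
  let ?N = "CARD('n)"
  have "(\<Sum>i\<in>(UNIV::'n set). complex_of_real (Re (coeff P (pos i + 1))) *
            (if pos i + 1 = kap ?N m then 1 else 0))
      = (\<Sum>i\<in>(UNIV::'n set). if pos i + 1 = kap ?N m then coeff P (kap ?N m) else 0)"
    by (rule sum.cong) (auto simp: real)
  also have "\<dots> = coeff P m"
  proof (cases "1 \<le> kap ?N m \<and> kap ?N m \<le> ?N")
    case True
    then obtain i :: 'n where i: "pos i + 1 = kap ?N m" using pos_ex by blast
    have "coeff P (kap ?N m) = coeff P m"
    proof (cases "m \<le> ?N")
      case True then show ?thesis by (simp add: kap_def)
    next
      case False
      then have "kap ?N m = 2 * ?N - m" by (simp add: kap_def)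
      moreover have "m \<le> 2 * ?N" using \<open>1 \<le> kap ?N m \<and> kap ?N m \<le> ?N\<close> False
        by (simp add: kap_def) linarith
      ultimately show ?thesis using sym by simp
    qed
    then show ?thesis using sum_pos_delta[OF i, of "\<lambda>_. coeff P (kap ?N m)"] by simp
  next
    case False
    then have k0: "kap ?N m = 0" by (auto simp: kap_def)
    have "m = 0 \<or> m \<ge> 2 * ?N" using k0 by (auto simp: kap_def split: if_splits)
    then have "coeff P m = 0" using P0 big by auto
    then show ?thesis using sum_pos_none[of "kap ?N m", where 'n='n] k0 by simp
  qed
  finally show ?thesis .
qed

lemma surj_pert:
  fixes P :: "complex poly" and b :: "real ^ 'n::{finite,wellorder}"
  assumes real: "\<And>m. coeff P m \<in> \<real>" and P0: "coeff P 0 = 0"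
    and big: "\<And>m. m \<ge> 2 * CARD('n) \<Longrightarrow> coeff P m = 0"
    and sym: "\<And>m. m \<le> 2 * CARD('n) \<Longrightarrow> coeff P (2 * CARD('n) - m) = coeff P m"
  shows "gpoly (b + d *\<^sub>R (\<chi> i. Re (coeff P (pos i + 1)))) = gpoly b + smult (of_real d) P"
proof (rule poly_eqI)
  fix m
  let ?v = "(\<chi> i. Re (coeff P (pos i + 1))) :: real ^ 'n::{finite,wellorder}"
  have "(\<Sum>i\<in>UNIV. complex_of_real ((b + d *\<^sub>R ?v) $ i) * (if pos i + 1 = kap CARD('n) m then 1 else 0))
     = (\<Sum>i\<in>UNIV. complex_of_real (b $ i) * (if pos i + 1 = kap CARD('n) m then 1 else 0))
       + of_real d * (\<Sum>i\<in>(UNIV::'n set). complex_of_real (Re (coeff P (pos i + 1))) *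
            (if pos i + 1 = kap CARD('n) m then 1 else 0))"
    by (simp add: sum.distrib sum_distrib_left algebra_simps)
  also have "\<dots> = (\<Sum>i\<in>UNIV. complex_of_real (b $ i) * (if pos i + 1 = kap CARD('n) m then 1 else 0))
       + of_real d * coeff P m"
    using sum_v[OF real P0 big sym, of m] by simp
  finally show "coeff (gpoly (b + d *\<^sub>R ?v)) m = coeff (gpoly b + smult (of_real d) P) m"
    unfolding coeff_add coeff_smult coeff_gpoly by (simp add: algebra_simps)
qed


lemma pert:
  fixes b :: "real ^ 'n::{finite,wellorder}" and c :: real
  assumes g: "gpoly b = [:1, - complex_of_real c, 1:] ^ j * r" and j: "1 \<le> j"
  obtains v where "\<And>d x. poly (gpoly (b + d *\<^sub>R v)) x =
     (poly [:1, - complex_of_real c, 1:] x ^ j + of_real d * x ^ j) * poly r x"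
proof -
  define Q where "Q = [:1, - complex_of_real c, 1:]"
  define N where "N = CARD('n)"
  have Qreal: "\<And>n. coeff Q n \<in> \<real>" unfolding Q_def by (auto simp: coeff_pCons split: nat.split)
  have degQ: "degree Q = 2" unfolding Q_def by simp
  have Qnz: "Q \<noteq> 0" unfolding Q_def by simp
  have reflQ: "reflect_poly Q = Q" unfolding Q_def by (simp add: reflect_poly_def)
  have gQ: "gpoly b = Q ^ j * r" using g Q_def by simp
  have rnz: "r \<noteq> 0" using gpoly_nz[of b] gQ by auto
  have Qjnz: "Q ^ j \<noteq> 0" using Qnz by simp
  have degr: "2 * N = 2 * j + degree r"
    using degree_gpoly[of b] gQ degree_mult_eq[OF Qjnz rnz] degree_power_eq[OF Qnz, of j] degQ
    by (simp add: N_def)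
  define D where "D = degree r"
  have reflr: "reflect_poly r = r"
  proof -
    have "Q ^ j * reflect_poly r = Q ^ j * r"
      using reflect_gpoly[of b] unfolding gQ reflect_poly_mult reflect_poly_power reflQ .
    then show ?thesis using Qnz by auto
  qed
  have rsym: "coeff r (D - t) = coeff r t" if "t \<le> D" for t
    using arg_cong[OF reflr, of "\<lambda>p. coeff p t"] that by (simp add: coeff_reflect_poly D_def)
  have rbig: "coeff r t = 0" if "t > D" for t
    using that by (simp add: coeff_eq_0 D_def)
  have rreal: "coeff r m \<in> \<real>" for m
  proof -
    have "poly (Q ^ j * map_poly cnj r) x = poly (Q ^ j * r) x" for x
    proof -
      have Qx: "poly Q x = cnj (poly Q (cnj x))" using poly_cnj_real[OF Qreal, of "cnj x"] by simp
      have "poly (Q ^ j * map_poly cnj r) x = cnj (poly (Q ^ j * r) (cnj x))"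
        by (simp add: Qx)
      also have "\<dots> = poly (Q ^ j * r) x"
        using poly_gpoly_cnj[of b "cnj x"] unfolding gQ by simp
      finally show ?thesis .
    qed
    then have "poly (Q ^ j * map_poly cnj r) = poly (Q ^ j * r)" by (rule ext)
    then have "Q ^ j * map_poly cnj r = Q ^ j * r" by (simp add: poly_eq_poly_eq_iff)
    then have "map_poly cnj r = r" using Qnz by auto
    then have "cnj (coeff r m) = coeff r m"
      by (metis \<open>map_poly cnj r = r\<close> coeff_map_poly complex_cnj_zero)
    then show ?thesis by (simp add: Reals_cnj_iff)
  qed
  define P where "P = monom 1 j * r"
  have cP: "coeff P m = (if m < j then 0 else coeff r (m - j))" for m
    by (simp add: P_def coeff_monom_mult)
  have Preal: "\<And>m. coeff P m \<in> \<real>" using rreal by (simp add: cP)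
  have P0: "coeff P 0 = 0" using j by (simp add: cP)
  have Pbig: "coeff P m = 0" if "m \<ge> 2 * CARD('n)" for m
    using that j degr rbig[of "m - j"] unfolding cP N_def D_def by auto
  have Psym: "coeff P (2 * CARD('n) - m) = coeff P m" if m: "m \<le> 2 * CARD('n)" for m
  proof -
    have m': "m \<le> 2 * N" using m by (simp add: N_def)
    consider "m < j" | "2 * N - m < j" | "j \<le> m \<and> j \<le> 2 * N - m" by linarith
    then have "coeff P (2 * N - m) = coeff P m"
    proof cases
      case 1
      then show ?thesis unfolding cP using rbig[of "2 * N - m - j"] degr j m' by (auto simp: D_def)
    next
      case 2
      then show ?thesis unfolding cP using rbig[of "m - j"] degr j m' by (auto simp: D_def)
    next
      case 3
      then have "m - j \<le> D" "D - (m - j) = 2 * N - m - j" using degr m' by (auto simp: D_def)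
      then show ?thesis unfolding cP using 3 rsym[of "m - j"] by auto
    qed
    then show ?thesis by (simp add: N_def)
  qed
  define v where "v = ((\<chi> i. Re (coeff P (pos i + 1))) :: real ^ 'n::{finite,wellorder})"
  have "poly (gpoly (b + d *\<^sub>R v)) x =
     (poly Q x ^ j + of_real d * x ^ j) * poly r x" for d x
  proof -
    have "gpoly (b + d *\<^sub>R v) = gpoly b + smult (of_real d) P"
      unfolding v_def by (rule surj_pert[OF Preal P0 Pbig Psym])
    then show ?thesis by (simp add: gQ P_def poly_monom algebra_simps)
  qed
  then show ?thesis using that Q_def by blast
qed


lemma quadK:
  fixes w x :: complex
  assumes eq: "1 + w * x + x ^ 2 = 0" and x1: "cmod x = 1"
  shows "w = of_real (- 2 * Re x)"
proof -
  have x0: "x \<noteq> 0" using x1 by auto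
  have xc: "x * cnj x = 1" using x1 complex_norm_square[of x] by simp
  have "w * x = - (cnj x + x) * x" using eq xc by algebra
  then have "w = - (cnj x + x)" using x0 by simp
  then show ?thesis using complex_add_cnj[of x] by (simp add: add.commute)
qed

lemma root_quad: "\<exists>x::complex. 1 + w * x + x ^ 2 = 0"
proof -
  define s where "s = csqrt (w ^ 2 - 4)"
  have s2: "s ^ 2 = w ^ 2 - 4" unfolding s_def by simp
  have "1 + w * ((- w + s) / 2) + ((- w + s) / 2) ^ 2 = 0"
    using s2 by (simp add: field_simps power2_eq_square) algebra
  then show ?thesis by blast
qed


lemma sq_dvd_of_order:
  fixes p :: "complex poly"
  assumes "1 < order z p"
  shows "[:-z, 1:] ^ 2 dvd p"
proof -
  have "[:-z, 1:] ^ 2 dvd [:-z, 1:] ^ order z p" using assms by (intro le_imp_power_dvd) simp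
  then show ?thesis using order_1 dvd_trans by blast
qed

lemma not_interior_double:
  fixes b :: "real ^ 'n::{finite,wellorder}"
  assumes bV: "b \<in> Vset" and z: "1 < order z (gpoly b)"
  shows "b \<notin> interior Vset"
proof -
  let ?g = "gpoly b"
  have degp: "degree ?g > 0" by (simp add: degree_gpoly)
  have zr: "poly ?g z = 0" and zd: "poly (pderiv ?g) z = 0"
    using order_gt1_iff[OF degp] z by auto
  have z1: "cmod z = 1" using bV zr unfolding Vset_def by auto
  have zz: "z * cnj z = 1" using z1 complex_norm_square[of z] by simp
  define c where "c = 2 * Re z"
  define Q where "Q = [:1, - complex_of_real c, 1:]"
  have Qfac: "Q = [:-z, 1:] * [:-cnj z, 1:]"
    using zz complex_add_cnj[of z] by (simp add: Q_def c_def algebra_simps)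
  have polyQ: "poly Q x = 1 - of_real c * x + x ^ 2" for x
    by (simp add: Q_def algebra_simps power2_eq_square)
  show ?thesis
  proof (cases "Im z = 0")
    case True
    have cz: "cnj z = z" using True by (simp add: complex_eq_iff)
    have cabs: "\<bar>c\<bar> = 2" using z1 True by (simp add: c_def cmod_eq_Re)
    obtain r where r: "?g = [:-z, 1:] ^ 2 * r" using sq_dvd_of_order[OF z] by (elim dvdE)
    have gQ: "?g = [:1, - complex_of_real c, 1:] ^ 1 * r"
      using r Qfac cz by (simp add: Q_def power2_eq_square)
    obtain v where v: "\<And>d x. poly (gpoly (b + d *\<^sub>R v)) x =
        (poly [:1, - complex_of_real c, 1:] x ^ 1 + of_real d * x ^ 1) * poly r x"
      using pert[OF gQ] by auto
    show ?thesis unfolding mem_interior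
    proof
      assume "\<exists>e>0. ball b e \<subseteq> Vset"
      then obtain e where e: "e > 0" "ball b e \<subseteq> Vset" by blast
      define t where "t = e / (4 * (norm v + 1))"
      have pos4: "4 * (norm v + 1) > 0" by (smt (verit) norm_ge_zero)
      then have t0: "t > 0" unfolding t_def using e by simp
      define d where "d = - c * t"
      define w where "w = complex_of_real (d - c)"
      obtain x0 where x0: "1 + w * x0 + x0 ^ 2 = 0" using root_quad by blast
      have "poly (gpoly (b + d *\<^sub>R v)) x0 = (1 + w * x0 + x0 ^ 2) * poly r x0"
        unfolding v by (simp add: w_def polyQ[unfolded Q_def] algebra_simps power2_eq_square)
      then have root: "poly (gpoly (b + d *\<^sub>R v)) x0 = 0" using x0 by simp
      have "cmod x0 \<noteq> 1"
      proof
        assume "cmod x0 = 1"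
        then have "w = of_real (- 2 * Re x0)" using quadK[OF x0] by simp
        then have "d - c = - 2 * Re x0" unfolding w_def of_real_eq_iff .
        moreover have "\<bar>Re x0\<bar> \<le> 1" using abs_Re_le_cmod[of x0] \<open>cmod x0 = 1\<close> by simp
        moreover have "\<bar>d - c\<bar> = 2 * (1 + t)"
        proof -
          have "d - c = - c * (1 + t)" by (simp add: d_def algebra_simps)
          then have "\<bar>d - c\<bar> = \<bar>c\<bar> * \<bar>1 + t\<bar>" by (simp add: abs_mult)
          then show ?thesis using cabs t0 by simp
        qed
        ultimately have "\<bar>- 2 * Re x0\<bar> = 2 * (1 + t)" "\<bar>Re x0\<bar> \<le> 1" by simp_all
        then show False using t0 by (simp add: abs_mult)
      qed
      then have notV: "b + d *\<^sub>R v \<notin> Vset" using root unfolding Vset_def by auto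
      have "dist b (b + d *\<^sub>R v) = \<bar>d\<bar> * norm v" by (simp add: dist_norm)
      also have "\<dots> = 2 * t * norm v" using cabs t0 by (simp add: d_def abs_mult)
      also have "\<dots> < e"
      proof -
        have "2 * t * norm v \<le> 2 * t * (norm v + 1)" using t0 by simp
        also have "\<dots> = e / 2" unfolding t_def using pos4 by (simp add: field_simps)
        finally show ?thesis using e by linarith
      qed
      finally have "b + d *\<^sub>R v \<in> ball b e" by simp
      with e notV show False by blast
    qed
  next
    case False
    have zc: "cnj z \<noteq> z"
    proof
      assume "cnj z = z"
      then have "Im (cnj z) = Im z" by simp
      then show False using False by simp
    qed
    have dreal: "\<And>n. coeff (pderiv ?g) n \<in> \<real>"
      by (simp add: coeff_pderiv coeff_gpoly_real)
    have czr: "poly ?g (cnj z) = 0" using gpoly_root_cnj[OF zr] .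
    have czd: "poly (pderiv ?g) (cnj z) = 0"
      using real_poly_cnj_root_iff[OF dreal] zd by blast
    have zc2: "1 < order (cnj z) ?g" using order_gt1_iff[OF degp] czr czd by auto
    obtain s where s: "?g = [:-z, 1:] ^ 2 * s" using sq_dvd_of_order[OF z] by (elim dvdE)
    have nz: "[:-z, 1:] ^ 2 * s \<noteq> 0" using s gpoly_nz[of b] by simp
    have o0: "order (cnj z) ([:-z, 1:] ^ 2) = 0"
      by (rule order_0I) (use zc in simp)
    have "order (cnj z) ?g = order (cnj z) s"
      unfolding s order_mult[OF nz] o0 by simp
    then have "1 < order (cnj z) s" using zc2 by simp
    then obtain r where r: "s = [:-cnj z, 1:] ^ 2 * r" using sq_dvd_of_order by (metis dvdE)
    have gQ: "?g = [:1, - complex_of_real c, 1:] ^ 2 * r"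
    proof -
      have "[:1, - complex_of_real c, 1:] ^ 2 = [:-z, 1:] ^ 2 * [:-cnj z, 1:] ^ 2"
        using Qfac unfolding Q_def by (simp only: power_mult_distrib)
      then show ?thesis using s r by (simp add: mult.assoc)
    qed
    obtain v where v: "\<And>d x. poly (gpoly (b + d *\<^sub>R v)) x =
        (poly [:1, - complex_of_real c, 1:] x ^ 2 + of_real d * x ^ 2) * poly r x"
      using pert[OF gQ] by auto
    show ?thesis unfolding mem_interior
    proof
      assume "\<exists>e>0. ball b e \<subseteq> Vset"
      then obtain e where e: "e > 0" "ball b e \<subseteq> Vset" by blast
      define t where "t = min 1 (e / (2 * (norm v + 1)))"
      have pos2: "2 * (norm v + 1) > 0" by (smt (verit) norm_ge_zero)
      then have t0: "t > 0" unfolding t_def using e by simp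
      have t1: "t \<le> 1" by (simp add: t_def)
      have te: "t \<le> e / (2 * (norm v + 1))" by (simp add: t_def)
      define d where "d = t ^ 2"
      define w where "w = - complex_of_real c + \<i> * complex_of_real t"
      obtain x0 where x0: "1 + w * x0 + x0 ^ 2 = 0" using root_quad by blast
      have Qx0: "poly Q x0 = - \<i> * of_real t * x0"
        using x0 unfolding polyQ w_def by (simp add: algebra_simps)
      have "poly (gpoly (b + d *\<^sub>R v)) x0 = (poly Q x0 ^ 2 + of_real d * x0 ^ 2) * poly r x0"
        unfolding v Q_def ..
      also have "poly Q x0 ^ 2 + of_real d * x0 ^ 2 = 0"
        unfolding Qx0 d_def by (simp add: power_mult_distrib algebra_simps)
      finally have root: "poly (gpoly (b + d *\<^sub>R v)) x0 = 0" by simp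
      have "cmod x0 \<noteq> 1"
      proof
        assume "cmod x0 = 1"
        then have "w = of_real (- 2 * Re x0)" using quadK[OF x0] by simp
        then have "Im w = 0" by simp
        then show False using t0 unfolding w_def by simp
      qed
      then have notV: "b + d *\<^sub>R v \<notin> Vset" using root unfolding Vset_def by auto
      have "dist b (b + d *\<^sub>R v) = \<bar>d\<bar> * norm v" by (simp add: dist_norm)
      also have "\<dots> = t * (t * norm v)" by (simp add: d_def power2_eq_square)
      also have "\<dots> \<le> t * norm v" using t0 t1 by (simp add: mult_left_le_one_le)
      also have "\<dots> \<le> t * (norm v + 1)" using t0 by simp
      also have "\<dots> \<le> e / 2" using te pos2 by (simp add: field_simps)
      also have "\<dots> < e" using e by simp
      finally have "b + d *\<^sub>R v \<in> ball b e" by simp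
      with e notV show False by blast
    qed
  qed
qed


theorem lemma2p1p3:
  "frontier (Vset :: (real ^ 'n::{finite,wellorder}) set) =
     {b \<in> Vset. \<exists>z. order z (gpoly b) > 1}"
proof -
  have cl: "closure (Vset :: (real ^ 'n::{finite,wellorder}) set) = Vset" by (rule closure_closed[OF closed_V])
  show ?thesis
    unfolding frontier_def cl
    using simple_interior not_interior_double by blast
qed

end
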